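(* Let $A$, $c$, $d$ be positive integers such that $A^2 - 2cA - d$ is the square of an integer. Then $2A \leq (c+1)^2 + d$. *)

theory Defs
  imports Main
begin

end

theory Submission
  imports Defs
begin

theorem lemma4:
  fixes A c d :: int
  assumes "A > 0" and "c > 0" and "d > 0"
    and "\<exists>k::int. A^2 - 2*c*A - d = k^2"
  shows "2*A \<le> (c+1)^2 + d"
proof (cases "A \<le> c")
  case True
  have "0 \<le> c^2 + d + 1" using assms by (simp add: add_nonneg_nonneg)
  then show ?thesis using True by (simp add: power2_eq_square algebra_simps)
next
  case False
  obtain k0 where k0: "A^2 - 2*c*A - d = k0^2" using assms(4) by blast
  define k where "k = \<bar>k0\<bar>"
  have k: "A^2 - 2*c*A - d = k^2" "k \<ge> 0" using k0 by (auto simp: k_def)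
  define m where "m = A - c - k"
  have eq: "c^2 + d = m*(m+2*k)" using k(1) unfolding m_def by (simp add: power2_eq_square algebra_simps)
  have "m \<ge> 1"
  proof (rule ccontr)
    assume "\<not> m \<ge> 1"
    hence "m \<le> 0" by simp
    moreover have "m + 2*k > 0" using False k(2) unfolding m_def by simp
    ultimately have "m*(m+2*k) \<le> 0" by (simp add: mult_nonpos_nonneg)
    moreover have "c^2 + d > 0" using assms by (simp add: add_nonneg_pos)
    ultimately show False using eq by simp
  qed
  have key: "m*(m+2*k) + 1 \<ge> 2*m + 2*k"
  proof (cases "m = 1")
    case True then show ?thesis by simp
  next
    case False
    hence "m \<ge> 2" using \<open>m \<ge> 1\<close> by simp
    have "m*m \<ge> 2*m" using \<open>m \<ge> 2\<close> by (simp add: mult_right_mono)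
    moreover have "m*k \<ge> k" using mult_right_mono[OF \<open>m \<ge> 1\<close> k(2)] by simp
    ultimately show ?thesis by (simp add: algebra_simps)
  qed
  show ?thesis using key eq unfolding m_def by (simp add: power2_eq_square algebra_simps)
qed

end
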